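(* For each $i\in\{1,\dots,m\}$ let $A_i:\mathbb{R}^n\rightrightarrows\mathbb{R}^n$ be a maximally monotone symmetric linear relation. Then the infimal convolution $f=q_{A_1}\,\square\cdots\square\,q_{A_m}$ is a generalized linear-quadratic function and $$\partial f=\Big(\sum_{i=1}^mA_i^{-1}\Big)^{-1},$$ the parallel sum of the $A_i$.
   Context: A linear relation is an operator $\mathbb{R}^n\rightrightarrows\mathbb{R}^n$ whose graph is a linear subspace; monotone: $\langle x^*-y^*,x-y\rangle\ge0$ on the graph; maximally monotone: no monotone operator with strictly larger graph; symmetric: $\langle x,y^*\rangle=\langle y,x^*\rangle$ for all $(x,x^* ),(y,y^* )$ in the graph. Inverses are set-valued; sums are pointwise Minkowski sums. For a monotone linear relation $B$, $q_B(x)=\frac12\langle x,Bx\rangle$ on $\operatorname{dom}B$ and $\infty$ elsewhere. Infimal convolution: $(g\,\square\,h)(x)=\inf_y\{g(y)+h(x-y)\}$. $\partial$ denotes the Fenchel subdifferential. A generalized linear-quadratic function is one of the form $x\mapsto\frac12\langle x-a,B(x-a)\rangle+\langle b,x\rangle+c$ with $B$ a linear relation. *)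

theory Defs
  imports "HOL-Analysis.Analysis" "HOL-Library.Extended_Real"
begin

text \<open>Set-valued operators on R^n are represented by their graphs.\<close>
type_synonym 'n rel = "((real^'n) \<times> (real^'n)) set"

definition linear_relation :: "('n::finite) rel \<Rightarrow> bool" where
  "linear_relation A \<longleftrightarrow> subspace A"

definition monotone_rel :: "('n::finite) rel \<Rightarrow> bool" where
  "monotone_rel A \<longleftrightarrow>
     (\<forall>x x' y y'. (x, x') \<in> A \<longrightarrow> (y, y') \<in> A \<longrightarrow> 0 \<le> (x' - y') \<bullet> (x - y))"

definition maximally_monotone :: "('n::finite) rel \<Rightarrow> bool" where
  "maximally_monotone A \<longleftrightarrow> monotone_rel A \<and>
     (\<forall>B. monotone_rel B \<longrightarrow> A \<subseteq> B \<longrightarrow> B = A)"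

definition symmetric_rel :: "('n::finite) rel \<Rightarrow> bool" where
  "symmetric_rel A \<longleftrightarrow>
     (\<forall>x x' y y'. (x, x') \<in> A \<longrightarrow> (y, y') \<in> A \<longrightarrow> x \<bullet> y' = y \<bullet> x')"

text \<open>q_B(x) = 1/2 <x, Bx> on dom B (any element of Bx; the value is independent of
  the choice for monotone linear relations), +\<infinity> elsewhere.\<close>
definition qB :: "('n::finite) rel \<Rightarrow> real^'n::finite \<Rightarrow> ereal" where
  "qB B x = (if x \<in> Domain B then ereal (1/2 * (x \<bullet> (SOME y. (x, y) \<in> B))) else \<infinity>)"

definition infconv :: "nat \<Rightarrow> (nat \<Rightarrow> real^'n::finite \<Rightarrow> ereal) \<Rightarrow> real^'n \<Rightarrow> ereal" where
  "infconv m F x = Inf {(\<Sum>i\<in>{1..m}. F i (y i)) | y. (\<Sum>i\<in>{1..m}. y i) = x}"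

definition rel_sum :: "nat \<Rightarrow> (nat \<Rightarrow> ('n::finite) rel) \<Rightarrow> ('n::finite) rel" where
  "rel_sum m A = {(x, \<Sum>i\<in>{1..m}. y i) | x y. \<forall>i\<in>{1..m}. (x, y i) \<in> A i}"

definition subdiff :: "(real^'n::finite \<Rightarrow> ereal) \<Rightarrow> ('n::finite) rel" where
  "subdiff f = {(x, s). \<bar>f x\<bar> \<noteq> \<infinity> \<and>
                   (\<forall>y. f y \<ge> f x + ereal (s \<bullet> (y - x)))}"

definition gen_linear_quadratic :: "(real^'n::finite \<Rightarrow> ereal) \<Rightarrow> bool" where
  "gen_linear_quadratic f \<longleftrightarrow>
     (\<exists>B a b c. linear_relation B \<and> monotone_rel B \<and>
        (\<forall>x. f x = qB B (x - a) + ereal (b \<bullet> x + c)))"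

end

theory Submission
  imports Defs "HOL-Analysis.Analysis"
begin


definition perp :: "'a::real_inner set \<Rightarrow> 'a set" where
  "perp S = {x. \<forall>y\<in>S. inner x y = 0}"

lemma subspace_perp: "subspace (perp S)"
  unfolding perp_def subspace_def by (auto simp: inner_add_left)

lemma perp_perp:
  fixes S :: "'a::euclidean_space set"
  assumes "subspace S" shows "perp (perp S) = S"
proof
  show "S \<subseteq> perp (perp S)" unfolding perp_def by (auto simp: inner_commute)
next
  show "perp (perp S) \<subseteq> S"
  proof
    fix x assume x: "x \<in> perp (perp S)"
    obtain y z where y: "y \<in> span S" and z: "\<And>w. w \<in> span S \<Longrightarrow> orthogonal z w" and xyz: "x = y + z"
      using orthogonal_subspace_decomp_exists by blast
    have yS: "y \<in> S" using y assms by (metis span_eq_iff)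
    have "z \<in> perp S" using z span_base unfolding perp_def orthogonal_def by blast
    hence "inner x z = 0" using x unfolding perp_def by blast
    moreover have "inner y z = 0" using z[OF y] by (simp add: orthogonal_def inner_commute)
    ultimately have "inner z z = 0" using xyz by (simp add: inner_add_left)
    hence "z = 0" by simp
    thus "x \<in> S" using xyz yS by simp
  qed
qed

lemma perp_sum_inter:
  fixes K L :: "'a::euclidean_space set"
  assumes "subspace K" "subspace L"
  shows "perp (K \<inter> L) = {x + y | x y. x \<in> perp K \<and> y \<in> perp L}"
proof -
  let ?M = "{x + y | x y. x \<in> perp K \<and> y \<in> perp L}"
  have sM: "subspace ?M" by (rule subspace_sums[OF subspace_perp subspace_perp])
  have "perp ?M = perp (perp K) \<inter> perp (perp L)"
  proof
    show "perp ?M \<subseteq> perp (perp K) \<inter> perp (perp L)"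
    proof
      fix z assume z: "z \<in> perp ?M"
      have "\<forall>x\<in>perp K. inner z x = 0"
      proof
        fix x assume "x \<in> perp K"
        then have "x + 0 \<in> ?M" using subspace_0[OF subspace_perp] by blast
        then show "inner z x = 0" using z unfolding perp_def by auto
      qed
      moreover have "\<forall>x\<in>perp L. inner z x = 0"
      proof
        fix x assume "x \<in> perp L"
        then have "0 + x \<in> ?M" using subspace_0[OF subspace_perp] by blast
        then show "inner z x = 0" using z unfolding perp_def by auto
      qed
      ultimately show "z \<in> perp (perp K) \<inter> perp (perp L)" unfolding perp_def by blast
    qed
  next
    show "perp (perp K) \<inter> perp (perp L) \<subseteq> perp ?M"
      unfolding perp_def by (auto simp: inner_add_right)
  qed
  also have "\<dots> = K \<inter> L" using perp_perp[OF assms(1)] perp_perp[OF assms(2)] by simp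
  finally have "perp (K \<inter> L) = perp (perp ?M)" by simp
  also have "\<dots> = ?M" using perp_perp[OF sM] .
  finally show ?thesis .
qed



lemma real_quad_zero:
  fixes a b :: real
  assumes "\<And>t. 0 \<le> t * a + t^2 * b" shows "a = 0"
proof (rule ccontr)
  assume a: "a \<noteq> 0"
  define c where "c = \<bar>b\<bar> + 1"
  define t where "t = - a / c"
  have pos: "c > 0" unfolding c_def by simp
  have e1: "t * a = - (a^2/c^2) * c"
    unfolding t_def using pos by (simp add: power2_eq_square field_simps)
  have e2: "t^2 = a^2/c^2" unfolding t_def by (simp add: power_divide)
  have "t * a + t^2 * b \<le> t * a + t^2 * \<bar>b\<bar>"
    by (intro add_left_mono mult_left_mono) auto
  also have "\<dots> = (a^2/c^2) * (\<bar>b\<bar> - c)"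
    unfolding e1 e2 using pos by (simp add: field_simps)
  also have "\<dots> = - (a^2/c^2)" unfolding c_def by simp
  also have "\<dots> < 0" using a pos by simp
  finally show False using assms[of t] by simp
qed

lemma rel_nonneg:
  assumes "subspace A" "monotone_rel A" "(x, w) \<in> A" shows "0 \<le> w \<bullet> x"
proof -
  have "(0, 0) \<in> A" using subspace_0[OF assms(1)] by (simp add: zero_prod_def)
  then show ?thesis using assms(2,3) unfolding monotone_rel_def by force
qed

lemma rel_mono_of_nonneg:
  assumes "subspace A" "\<And>x w. (x, w) \<in> A \<Longrightarrow> 0 \<le> w \<bullet> x" shows "monotone_rel A"
  unfolding monotone_rel_def
proof (intro allI impI)
  fix x x' y y' assume "(x, x') \<in> A" "(y, y') \<in> A"
  then have "(x, x') - (y, y') \<in> A" using subspace_diff[OF assms(1)] by blast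
  then show "0 \<le> (x' - y') \<bullet> (x - y)" using assms(2) by simp
qed

lemma rel_sg:
  assumes "subspace A" "\<And>x w. (x, w) \<in> A \<Longrightarrow> 0 \<le> w \<bullet> x" "symmetric_rel A"
    and "(x, u) \<in> A" "(y, w) \<in> A"
  shows "1/2 * (x \<bullet> u) + u \<bullet> (y - x) \<le> 1/2 * (y \<bullet> w)"
proof -
  have "(y, w) - (x, u) \<in> A" using subspace_diff[OF assms(1)] assms(4,5) by blast
  then have "0 \<le> (w - u) \<bullet> (y - x)" using assms(2) by simp
  moreover have "x \<bullet> w = y \<bullet> u" using assms(3,4,5) unfolding symmetric_rel_def by blast
  ultimately show ?thesis by (simp add: inner_diff_left inner_diff_right inner_commute algebra_simps)
qed

lemma rel_q0:
  assumes "subspace A" "\<And>x w. (x, w) \<in> A \<Longrightarrow> 0 \<le> w \<bullet> x" "symmetric_rel A"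
    and "(x, u) \<in> A" "x \<bullet> u = 0" "(y, w) \<in> A"
  shows "y \<bullet> u = 0"
proof -
  have sym: "x \<bullet> w = y \<bullet> u" using assms(3,4,6) unfolding symmetric_rel_def by blast
  have "0 \<le> t * (2 * (y \<bullet> u)) + t^2 * (y \<bullet> w)" for t
  proof -
    have "(x, u) + t *\<^sub>R (y, w) \<in> A"
      using assms(1,4,6) by (metis subspace_add subspace_scale)
    then have "0 \<le> (u + t *\<^sub>R w) \<bullet> (x + t *\<^sub>R y)" using assms(2) by simp
    also have "\<dots> = t * (2 * (y \<bullet> u)) + t^2 * (y \<bullet> w)"
      using assms(5) sym by (simp add: inner_add_left inner_add_right inner_commute power2_eq_square algebra_simps)
    finally show ?thesis .
  qed
  then have "2 * (y \<bullet> u) = 0" by (rule real_quad_zero)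
  then show ?thesis by simp
qed

definition Jmap :: "(real^'n::finite) \<times> (real^'n) \<Rightarrow> (real^'n) \<times> (real^'n)" where
  "Jmap p = (snd p, - fst p)"

definition Lag :: "('n::finite) rel \<Rightarrow> bool" where
  "Lag T \<longleftrightarrow> subspace T \<and> perp T = Jmap ` T"

lemma Lag_sym: assumes "Lag T" shows "symmetric_rel T"
  unfolding symmetric_rel_def
proof (intro allI impI)
  fix x x' y y' assume a: "(x, x') \<in> T" "(y, y') \<in> T"
  then have "(x', -x) \<in> perp T" using assms unfolding Lag_def Jmap_def by force
  then have "inner (x', -x) (y, y') = 0" using a unfolding perp_def by blast
  then show "x \<bullet> y' = y \<bullet> x'" by (simp add: inner_commute)
qed

lemma Lag_perp_dom:
  assumes "Lag T" "z \<in> perp (Domain T)" shows "(0, z) \<in> T"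
proof -
  have "(z, 0) \<in> perp T" using assms(2) unfolding perp_def by force
  then have "(z, 0) \<in> Jmap ` T" using assms(1) unfolding Lag_def by simp
  then show ?thesis unfolding Jmap_def by force
qed

lemma max_mono_Lag:
  assumes lin: "linear_relation A" and mm: "maximally_monotone A" and sy: "symmetric_rel A"
  shows "Lag A"
proof -
  have sA: "subspace A" using lin unfolding linear_relation_def .
  have monA: "monotone_rel A" using mm unfolding maximally_monotone_def by blast
  define D where "D = Domain A"
  have sD: "subspace D" unfolding D_def subspace_def
  proof (intro conjI ballI allI)
    show "0 \<in> Domain A" using subspace_0[OF sA] by (force simp: zero_prod_def)
  next
    fix x y assume "x \<in> Domain A" "y \<in> Domain A"
    then obtain a b where "(x, a) \<in> A" "(y, b) \<in> A" by blast
    then have "(x, a) + (y, b) \<in> A" using subspace_add[OF sA] by blast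
    then show "x + y \<in> Domain A" by force
  next
    fix c :: real and x assume "x \<in> Domain A"
    then obtain a where "(x, a) \<in> A" by blast
    then have "c *\<^sub>R (x, a) \<in> A" using subspace_scale[OF sA] by blast
    then show "c *\<^sub>R x \<in> Domain A" by force
  qed
  have A0: "(0, e) \<in> A" if e: "e \<in> perp D" for e
  proof -
    define B where "B = {(y, w + e') | y w e'. (y, w) \<in> A \<and> e' \<in> perp D}"
    have "monotone_rel B" unfolding monotone_rel_def
    proof (intro allI impI)
      fix x x' y y' assume "(x, x') \<in> B" "(y, y') \<in> B"
      then obtain w1 e1 w2 e2 where h: "x' = w1 + e1" "(x, w1) \<in> A" "e1 \<in> perp D"
        "y' = w2 + e2" "(y, w2) \<in> A" "e2 \<in> perp D" unfolding B_def by blast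
      have "x - y \<in> D" using h(2,5) sD unfolding D_def by (meson Domain.intros subspace_diff)
      moreover have "e1 - e2 \<in> perp D" using h(3,6) subspace_perp by (metis subspace_diff)
      ultimately have "(e1 - e2) \<bullet> (x - y) = 0" unfolding perp_def by blast
      moreover have "0 \<le> (w1 - w2) \<bullet> (x - y)" using monA h(2,5) unfolding monotone_rel_def by blast
      ultimately show "0 \<le> (x' - y') \<bullet> (x - y)" using h(1,4)
        by (simp add: inner_diff_left inner_add_left algebra_simps)
    qed
    moreover have "A \<subseteq> B"
    proof
      fix p assume "p \<in> A"
      moreover have "(0::real^'a) \<in> perp D" using subspace_0[OF subspace_perp] by blast
      ultimately show "p \<in> B" unfolding B_def by (cases p) force
    qed
    ultimately have "B = A" using mm unfolding maximally_monotone_def by blast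
    moreover have "(0, 0 + e) \<in> B" unfolding B_def using subspace_0[OF sA] e
      by (force simp: zero_prod_def)
    ultimately show ?thesis by simp
  qed
  have "perp A = Jmap ` A"
  proof
    show "Jmap ` A \<subseteq> perp A"
    proof
      fix p assume "p \<in> Jmap ` A"
      then obtain y w where p: "p = (w, -y)" "(y, w) \<in> A" unfolding Jmap_def by force
      show "p \<in> perp A" unfolding perp_def
      proof (intro CollectI ballI)
        fix q assume "q \<in> A"
        then obtain y' w' where q: "q = (y', w')" "(y', w') \<in> A" by (cases q) auto
        have "y \<bullet> w' = y' \<bullet> w" using sy p(2) q(2) unfolding symmetric_rel_def by blast
        then show "inner p q = 0" using p q by (simp add: inner_commute)
      qed
    qed
  next
    show "perp A \<subseteq> Jmap ` A"
    proof
      fix p assume pA: "p \<in> perp A"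
      obtain v mx where p: "p = (v, mx)" by (cases p)
      define x where "x = - mx"
      have orth: "v \<bullet> y = x \<bullet> w" if "(y, w) \<in> A" for y w
        using pA that unfolding perp_def p x_def by (force simp: inner_commute)
      have "x \<in> perp (perp D)" unfolding perp_def[of "perp D"]
      proof (intro CollectI ballI)
        fix e assume "e \<in> perp D"
        then have "(0, e) \<in> A" by (rule A0)
        then show "x \<bullet> e = 0" using orth by force
      qed
      then have "x \<in> D" using perp_perp[OF sD] by simp
      then obtain w0 where w0: "(x, w0) \<in> A" unfolding D_def by blast
      have "v - w0 \<in> perp D" unfolding perp_def
      proof (intro CollectI ballI)
        fix y assume "y \<in> D"
        then obtain w where w: "(y, w) \<in> A" unfolding D_def by blast
        have "x \<bullet> w = y \<bullet> w0" using sy w0 w unfolding symmetric_rel_def by blast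
        then have "v \<bullet> y = w0 \<bullet> y" using orth[OF w] by (simp add: inner_commute)
        then show "(v - w0) \<bullet> y = 0" by (simp add: inner_diff_left)
      qed
      then have "(0, v - w0) \<in> A" by (rule A0)
      then have "(x, w0) + (0, v - w0) \<in> A" using w0 subspace_add[OF sA] by blast
      then have "(x, v) \<in> A" by simp
      moreover have "p = Jmap (x, v)" unfolding p Jmap_def x_def by simp
      ultimately show "p \<in> Jmap ` A" by blast
    qed
  qed
  then show ?thesis using sA unfolding Lag_def by blast
qed



definition par :: "('n::finite) rel \<Rightarrow> 'n rel \<Rightarrow> 'n rel" where
  "par T1 T2 = {(a + b, u) | a b u. (a, u) \<in> T1 \<and> (b, u) \<in> T2}"

lemma subspace_par: assumes "subspace T1" "subspace T2" shows "subspace (par T1 T2)"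
  unfolding subspace_def par_def
proof (intro conjI ballI allI)
  have "(0, 0) \<in> T1" "(0, 0) \<in> T2" using assms subspace_0 by (force simp: zero_prod_def)+
  then show "0 \<in> {(a + b, u) |a b u. (a, u) \<in> T1 \<and> (b, u) \<in> T2}"
    by (force simp: zero_prod_def)
next
  fix x y assume "x \<in> {(a + b, u) |a b u. (a, u) \<in> T1 \<and> (b, u) \<in> T2}"
    "y \<in> {(a + b, u) |a b u. (a, u) \<in> T1 \<and> (b, u) \<in> T2}"
  then obtain a b u a' b' u' where h: "x = (a + b, u)" "(a, u) \<in> T1" "(b, u) \<in> T2"
    "y = (a' + b', u')" "(a', u') \<in> T1" "(b', u') \<in> T2" by blast
  have "(a, u) + (a', u') \<in> T1" "(b, u) + (b', u') \<in> T2"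
    using h subspace_add assms by blast+
  then have "(a + a', u + u') \<in> T1" "(b + b', u + u') \<in> T2" by simp_all
  moreover have "x + y = ((a + a') + (b + b'), u + u')" using h by (simp add: algebra_simps)
  ultimately show "x + y \<in> {(a + b, u) |a b u. (a, u) \<in> T1 \<and> (b, u) \<in> T2}" by blast
next
  fix c :: real and x assume "x \<in> {(a + b, u) |a b u. (a, u) \<in> T1 \<and> (b, u) \<in> T2}"
  then obtain a b u where h: "x = (a + b, u)" "(a, u) \<in> T1" "(b, u) \<in> T2" by blast
  have "c *\<^sub>R (a, u) \<in> T1" "c *\<^sub>R (b, u) \<in> T2" using h subspace_scale assms by blast+
  then have "(c *\<^sub>R a, c *\<^sub>R u) \<in> T1" "(c *\<^sub>R b, c *\<^sub>R u) \<in> T2" by simp_all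
  moreover have "c *\<^sub>R x = (c *\<^sub>R a + c *\<^sub>R b, c *\<^sub>R u)" using h by (simp add: scaleR_add_right)
  ultimately show "c *\<^sub>R x \<in> {(a + b, u) |a b u. (a, u) \<in> T1 \<and> (b, u) \<in> T2}" by blast
qed

lemma Lag_perp_elem: assumes "Lag T" "(y, w) \<in> T" "(y', w') \<in> T" shows "w \<bullet> y' = y \<bullet> w'"
proof -
  have "(w, -y) \<in> perp T" using assms(1,2) unfolding Lag_def Jmap_def by force
  then have "inner (w, -y) (y', w') = 0" using assms(3) unfolding perp_def by blast
  then show ?thesis by simp
qed

lemma Lag_par: fixes T1 T2 :: "('n::finite) rel" assumes L1: "Lag T1" and L2: "Lag T2" shows "Lag (par T1 T2)"
proof -
  have s1: "subspace T1" and s2: "subspace T2" using L1 L2 unfolding Lag_def by blast+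
  have "perp (par T1 T2) = Jmap ` par T1 T2"
  proof
    show "Jmap ` par T1 T2 \<subseteq> perp (par T1 T2)"
    proof
      fix p assume "p \<in> Jmap ` par T1 T2"
      then obtain a b u where h: "p = (u, - (a + b))" "(a, u) \<in> T1" "(b, u) \<in> T2"
        unfolding par_def Jmap_def by force
      show "p \<in> perp (par T1 T2)" unfolding perp_def
      proof (intro CollectI ballI)
        fix q assume "q \<in> par T1 T2"
        then obtain a' b' u' where g: "q = (a' + b', u')" "(a', u') \<in> T1" "(b', u') \<in> T2"
          unfolding par_def by blast
        have "u \<bullet> a' = a \<bullet> u'" using Lag_perp_elem[OF L1 h(2) g(2)] .
        moreover have "u \<bullet> b' = b \<bullet> u'" using Lag_perp_elem[OF L2 h(3) g(3)] .
        ultimately show "inner p q = 0" using h g by (simp add: inner_add_left inner_add_right inner_diff_left)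
      qed
    qed
  next
    show "perp (par T1 T2) \<subseteq> Jmap ` par T1 T2"
    proof
      fix pq assume pq: "pq \<in> perp (par T1 T2)"
      obtain p q where pqd: "pq = (p, q)" by (cases pq)
      define K where "K = T1 \<times> T2"
      define L :: "(((real^'n) \<times> (real^'n)) \<times> ((real^'n) \<times> (real^'n))) set"
        where "L = {((a, u1), (b, u2)). u1 = u2}"
      have z1: "(0, 0) \<in> T1" "(0, 0) \<in> T2" using s1 s2 subspace_0 by (force simp: zero_prod_def)+
      have sK: "subspace K" unfolding K_def subspace_def using s1 s2 z1
        by (auto simp: zero_prod_def subspace_0 subspace_add subspace_scale)
      have sL: "subspace L" unfolding L_def subspace_def by (auto simp: zero_prod_def)
      define z where "z = ((p, q), (p, 0::real^'n))"
      have "z \<in> perp (K \<inter> L)" unfolding perp_def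
      proof (intro CollectI ballI)
        fix e assume "e \<in> K \<inter> L"
        then obtain a b u where e: "e = ((a, u), (b, u))" "(a, u) \<in> T1" "(b, u) \<in> T2"
          unfolding K_def L_def by auto
        then have "(a + b, u) \<in> par T1 T2" unfolding par_def by blast
        then have "inner (p, q) (a + b, u) = 0" using pq pqd unfolding perp_def by blast
        then show "inner z e = 0" unfolding z_def e by (simp add: inner_add_right)
      qed
      then obtain k l where kl: "z = k + l" "k \<in> perp K" "l \<in> perp L"
        using perp_sum_inter[OF sK sL] by blast
      obtain k1 k2 k3 k4 where kd: "k = ((k1, k2), (k3, k4))" by (metis prod.exhaust)
      obtain l1 l2 l3 l4 where ld: "l = ((l1, l2), (l3, l4))" by (metis prod.exhaust)
      have "((l1, 0), (0, 0)) \<in> L" unfolding L_def by simp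
      then have "l1 \<bullet> l1 = 0" using kl(3) ld unfolding perp_def by force
      then have l1: "l1 = 0" by simp
      have "((0, 0), (l3, 0)) \<in> L" unfolding L_def by simp
      then have "l3 \<bullet> l3 = 0" using kl(3) ld unfolding perp_def by force
      then have l3: "l3 = 0" by simp
      have "((0, l2 + l4), (0, l2 + l4)) \<in> L" unfolding L_def by simp
      then have "(l2 + l4) \<bullet> (l2 + l4) = 0" using kl(3) ld unfolding perp_def
        by (force simp: inner_add_left)
      then have l4: "l4 = - l2" by (simp add: add_eq_0_iff)
      have "(k1, k2) \<in> perp T1" unfolding perp_def
      proof (intro CollectI ballI)
        fix t assume "t \<in> T1"
        then have "(t, 0) \<in> K" unfolding K_def using z1 by (simp add: zero_prod_def)
        then have "inner k (t, 0) = 0" using kl(2) unfolding perp_def by blast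
        then show "inner (k1, k2) t = 0" using kd by simp
      qed
      then have "(k1, k2) \<in> Jmap ` T1" using L1 unfolding Lag_def by simp
      then obtain y1 w1 where t1: "(y1, w1) \<in> T1" "k1 = w1" "k2 = - y1" unfolding Jmap_def by force
      have "(k3, k4) \<in> perp T2" unfolding perp_def
      proof (intro CollectI ballI)
        fix t assume "t \<in> T2"
        then have "(0, t) \<in> K" unfolding K_def using z1 by (simp add: zero_prod_def)
        then have "inner k (0, t) = 0" using kl(2) unfolding perp_def by blast
        then show "inner (k3, k4) t = 0" using kd by simp
      qed
      then have "(k3, k4) \<in> Jmap ` T2" using L2 unfolding Lag_def by simp
      then obtain y2 w2 where t2: "(y2, w2) \<in> T2" "k3 = w2" "k4 = - y2" unfolding Jmap_def by force
      have eqs0: "p = k1 \<and> q = k2 + l2 \<and> p = k3 \<and> 0 = k4 + l4"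
        using kl(1) unfolding z_def kd ld l1 l3 by auto
      then have eqs: "p = k1" "q = k2 + l2" "p = k3" "0 = k4 + l4" by blast+
      have "w1 = p" "w2 = p" using eqs t1 t2 by simp_all
      then have "(y1 + y2, p) \<in> par T1 T2" using t1 t2 unfolding par_def by blast
      moreover have "y1 + y2 = - q" using eqs t1 t2 l4 by (auto simp: algebra_simps)
      ultimately have "(-q, p) \<in> par T1 T2" by simp
      moreover have "pq = Jmap (-q, p)" unfolding pqd Jmap_def by simp
      ultimately show "pq \<in> Jmap ` par T1 T2" by blast
    qed
  qed
  then show ?thesis using subspace_par[OF s1 s2] unfolding Lag_def by blast
qed

definition Pm :: "(nat \<Rightarrow> ('n::finite) rel) \<Rightarrow> nat \<Rightarrow> 'n rel" where
  "Pm A m = {(\<Sum>i\<in>{1..m}. x i, u) | x u. \<forall>i\<in>{1..m}. (x i, u) \<in> A i}"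

lemma Pm_0: "Pm A 0 = {0} \<times> UNIV"
  unfolding Pm_def by auto

lemma Pm_Suc: "Pm A (Suc m) = par (Pm A m) (A (Suc m))"
proof
  show "Pm A (Suc m) \<subseteq> par (Pm A m) (A (Suc m))"
  proof
    fix p assume "p \<in> Pm A (Suc m)"
    then obtain x u where h: "p = (\<Sum>i\<in>{1..Suc m}. x i, u)" "\<forall>i\<in>{1..Suc m}. (x i, u) \<in> A i"
      unfolding Pm_def by blast
    have "(\<Sum>i\<in>{1..m}. x i, u) \<in> Pm A m" using h(2) unfolding Pm_def by force
    moreover have "(x (Suc m), u) \<in> A (Suc m)" using h(2) by simp
    moreover have "p = ((\<Sum>i\<in>{1..m}. x i) + x (Suc m), u)" using h(1) by simp
    ultimately show "p \<in> par (Pm A m) (A (Suc m))" unfolding par_def by blast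
  qed
next
  show "par (Pm A m) (A (Suc m)) \<subseteq> Pm A (Suc m)"
  proof
    fix p assume "p \<in> par (Pm A m) (A (Suc m))"
    then obtain x u b where h: "p = ((\<Sum>i\<in>{1..m}. x i) + b, u)" "\<forall>i\<in>{1..m}. (x i, u) \<in> A i"
      "(b, u) \<in> A (Suc m)"
      unfolding par_def Pm_def by blast
    define x' where "x' = x(Suc m := b)"
    have "(\<Sum>i\<in>{1..m}. x' i) = (\<Sum>i\<in>{1..m}. x i)" unfolding x'_def by (intro sum.cong) auto
    then have "p = (\<Sum>i\<in>{1..Suc m}. x' i, u)" using h(1) by (simp add: x'_def)
    moreover have "\<forall>i\<in>{1..Suc m}. (x' i, u) \<in> A i" using h(2,3) unfolding x'_def
      by (auto simp: le_Suc_eq)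
    ultimately show "p \<in> Pm A (Suc m)" unfolding Pm_def by blast
  qed
qed

lemma Lag_Pm: "(\<forall>i\<in>{1..m}. Lag (A i)) \<Longrightarrow> Lag (Pm A m)"
proof (induction m)
  case 0
  have "subspace ({0::real^'a} \<times> (UNIV :: (real^'a) set))"
    unfolding subspace_def by (auto simp: zero_prod_def)
  moreover have "perp ({0::real^'a} \<times> (UNIV :: (real^'a) set)) = Jmap ` ({0} \<times> UNIV)"
  proof
    show "perp ({0::real^'a} \<times> (UNIV :: (real^'a) set)) \<subseteq> Jmap ` ({0} \<times> UNIV)"
    proof
      fix p assume p: "p \<in> perp ({0::real^'a} \<times> (UNIV :: (real^'a) set))"
      obtain a b where pd: "p = (a, b)" by (cases p)
      have "inner p (0, b) = 0" using p unfolding perp_def by blast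
      then have "b = 0" using pd by simp
      then have "p = Jmap (0, a)" using pd unfolding Jmap_def by simp
      then show "p \<in> Jmap ` ({0} \<times> UNIV)" by blast
    qed
  next
    show "Jmap ` ({0::real^'a} \<times> UNIV) \<subseteq> perp ({0} \<times> UNIV)"
      unfolding Jmap_def perp_def by auto
  qed
  ultimately show ?case unfolding Pm_0 Lag_def by blast
next
  case (Suc m)
  then show ?case unfolding Pm_Suc by (intro Lag_par) auto
qed



lemma subspace_Domain: assumes sA: "subspace (A :: ('n::finite) rel)" shows "subspace (Domain A)"
  unfolding subspace_def
proof (intro conjI ballI allI)
  show "0 \<in> Domain A" using subspace_0[OF sA] by (force simp: zero_prod_def)
next
  fix x y assume "x \<in> Domain A" "y \<in> Domain A"
  then obtain a b where "(x, a) \<in> A" "(y, b) \<in> A" by blast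
  then have "(x, a) + (y, b) \<in> A" using subspace_add[OF sA] by blast
  then show "x + y \<in> Domain A" by force
next
  fix c :: real and x assume "x \<in> Domain A"
  then obtain a where "(x, a) \<in> A" by blast
  then have "c *\<^sub>R (x, a) \<in> A" using subspace_scale[OF sA] by blast
  then show "c *\<^sub>R x \<in> Domain A" by force
qed

lemma qB_val: assumes "symmetric_rel B" "(x, w) \<in> B" shows "qB B x = ereal (1/2 * (x \<bullet> w))"
proof -
  have d: "x \<in> Domain B" using assms(2) by blast
  have s: "(x, SOME y. (x, y) \<in> B) \<in> B" using someI[of "\<lambda>y. (x, y) \<in> B", OF assms(2)] .
  have "x \<bullet> (SOME y. (x, y) \<in> B) = x \<bullet> w" using assms(1) s assms(2) unfolding symmetric_rel_def by metis
  then show ?thesis unfolding qB_def using d by simp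
qed

lemma qB_inf: assumes "x \<notin> Domain B" shows "qB B x = \<infinity>"
  unfolding qB_def using assms by simp

lemma rel_sum_conv:
  "converse (rel_sum m (\<lambda>i. converse (A i))) = Pm A m"
  unfolding rel_sum_def Pm_def by auto

theorem proposition4p29:
  fixes A :: "nat \<Rightarrow> ('n::finite) rel" and m :: nat
  assumes "m \<ge> 1"
    and H: "\<forall>i\<in>{1..m}. linear_relation (A i) \<and> maximally_monotone (A i) \<and> symmetric_rel (A i)"
  shows "gen_linear_quadratic (infconv m (\<lambda>i. qB (A i)))
    \<and> subdiff (infconv m (\<lambda>i. qB (A i))) = converse (rel_sum m (\<lambda>i. converse (A i)))"
proof -
  have sA: "\<And>i. i \<in> {1..m} \<Longrightarrow> subspace (A i)" using H unfolding linear_relation_def by blast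
  have syA: "\<And>i. i \<in> {1..m} \<Longrightarrow> symmetric_rel (A i)" using H by blast
  have nnA: "\<And>i x w. i \<in> {1..m} \<Longrightarrow> (x, w) \<in> A i \<Longrightarrow> 0 \<le> w \<bullet> x"
    using H sA rel_nonneg unfolding maximally_monotone_def by blast
  define P where "P = Pm A m"
  have LP: "Lag P" unfolding P_def proof (intro Lag_Pm ballI)
    fix i assume "i \<in> {1..m}" then show "Lag (A i)" using H max_mono_Lag by blast
  qed
  have sP: "subspace P" using LP unfolding Lag_def by blast
  have syP: "symmetric_rel P" using Lag_sym[OF LP] .
  have Pdef: "(x, u) \<in> P \<longleftrightarrow> (\<exists>xs. x = (\<Sum>i\<in>{1..m}. xs i) \<and> (\<forall>i\<in>{1..m}. (xs i, u) \<in> A i))" for x u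
    unfolding P_def Pm_def by auto
  have nnP: "0 \<le> u \<bullet> x" if xuP: "(x, u) \<in> P" for x u
  proof -
    obtain xs where h: "x = (\<Sum>i\<in>{1..m}. xs i)" "\<forall>i\<in>{1..m}. (xs i, u) \<in> A i" using Pdef[THEN iffD1, OF xuP] by blast
    have "u \<bullet> x = (\<Sum>i\<in>{1..m}. u \<bullet> xs i)" unfolding h(1) by (simp add: inner_sum_right)
    also have "\<dots> \<ge> 0" using h(2) nnA by (intro sum_nonneg) blast
    finally show ?thesis by simp
  qed
  have key: "(\<Sum>i\<in>{1..m}. y i) \<in> Domain P" if y: "\<forall>i\<in>{1..m}. y i \<in> Domain (A i)" for y
  proof -
    have sD: "subspace (Domain P)" using subspace_Domain[OF sP] .
    have "(\<Sum>i\<in>{1..m}. y i) \<in> perp (perp (Domain P))" unfolding perp_def[of "perp (Domain P)"]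
    proof (intro CollectI ballI)
      fix z assume "z \<in> perp (Domain P)"
      then have "(0, z) \<in> P" by (rule Lag_perp_dom[OF LP])
      then obtain xs where h: "0 = (\<Sum>i\<in>{1..m}. xs i)" "\<forall>i\<in>{1..m}. (xs i, z) \<in> A i" using Pdef[THEN iffD1] by blast
      have "(\<Sum>i\<in>{1..m}. z \<bullet> xs i) = z \<bullet> 0" unfolding h(1) by (simp add: inner_sum_right)
      then have "(\<Sum>i\<in>{1..m}. z \<bullet> xs i) = 0" by simp
      moreover have "\<forall>i\<in>{1..m}. 0 \<le> z \<bullet> xs i" using h(2) nnA by blast
      ultimately have z0: "\<forall>i\<in>{1..m}. z \<bullet> xs i = 0" using sum_nonneg_eq_0_iff[of "{1..m}" "\<lambda>i. z \<bullet> xs i"] by simp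
      have "\<forall>i\<in>{1..m}. y i \<bullet> z = 0"
      proof
        fix i assume i: "i \<in> {1..m}"
        obtain w where w: "(y i, w) \<in> A i" using y i by blast
        show "y i \<bullet> z = 0"
          by (rule rel_q0[OF sA[OF i] nnA[OF i] syA[OF i] _ _ w, of "xs i" z])
             (use h(2) i z0 in \<open>auto simp: inner_commute\<close>)
      qed
      then show "(\<Sum>i\<in>{1..m}. y i) \<bullet> z = 0" by (simp add: inner_sum_left)
    qed
    then show ?thesis using perp_perp[OF sD] by simp
  qed
  define F where "F = infconv m (\<lambda>i. qB (A i))"
  have Feq: "F x = qB P x" for x
  proof (cases "x \<in> Domain P")
    case True
    then obtain u where xu: "(x, u) \<in> P" by blast
    then obtain xs where h: "x = (\<Sum>i\<in>{1..m}. xs i)" "\<forall>i\<in>{1..m}. (xs i, u) \<in> A i" using Pdef[THEN iffD1] by blast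
    have vals: "(\<Sum>i\<in>{1..m}. qB (A i) (xs i)) = ereal (1/2 * (x \<bullet> u))"
    proof -
      have "(\<Sum>i\<in>{1..m}. qB (A i) (xs i)) = (\<Sum>i\<in>{1..m}. ereal (1/2 * (xs i \<bullet> u)))"
      proof (intro sum.cong refl)
        fix i assume i: "i \<in> {1..m}"
        show "qB (A i) (xs i) = ereal (1/2 * (xs i \<bullet> u))" using qB_val[OF syA[OF i]] h(2) i by blast
      qed
      also have "\<dots> = ereal (1/2 * (x \<bullet> u))"
        unfolding h(1) by (simp add: inner_sum_left sum_distrib_left)
      finally show ?thesis .
    qed
    have "F x = ereal (1/2 * (x \<bullet> u))" unfolding F_def infconv_def
    proof (rule antisym)
      show "Inf {\<Sum>i\<in>{1..m}. qB (A i) (y i) |y. (\<Sum>i\<in>{1..m}. y i) = x} \<le> ereal (1/2 * (x \<bullet> u))"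
        using h(1) vals by (intro Inf_lower) (metis (mono_tags, lifting) mem_Collect_eq)
    next
      show "ereal (1/2 * (x \<bullet> u)) \<le> Inf {\<Sum>i\<in>{1..m}. qB (A i) (y i) |y. (\<Sum>i\<in>{1..m}. y i) = x}"
      proof (rule Inf_greatest)
        fix v assume "v \<in> {\<Sum>i\<in>{1..m}. qB (A i) (y i) |y. (\<Sum>i\<in>{1..m}. y i) = x}"
        then obtain y where y: "v = (\<Sum>i\<in>{1..m}. qB (A i) (y i))" "(\<Sum>i\<in>{1..m}. y i) = x" by blast
        show "ereal (1/2 * (x \<bullet> u)) \<le> v"
        proof (cases "\<forall>i\<in>{1..m}. y i \<in> Domain (A i)")
          case False
          then obtain i where i: "i \<in> {1..m}" "y i \<notin> Domain (A i)" by blast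
          then have "qB (A i) (y i) = \<infinity>" by (simp add: qB_inf)
          then have "v = \<infinity>" unfolding y(1) sum_Pinfty using i(1) by blast
          then show ?thesis by simp
        next
          case True
          then have "\<forall>i\<in>{1..m}. \<exists>w. (y i, w) \<in> A i" by blast
          then obtain w where w: "\<forall>i\<in>{1..m}. (y i, w i) \<in> A i" by metis
          have "v = (\<Sum>i\<in>{1..m}. ereal (1/2 * (y i \<bullet> w i)))"
            unfolding y(1)
          proof (intro sum.cong refl)
            fix i assume i: "i \<in> {1..m}"
            show "qB (A i) (y i) = ereal (1/2 * (y i \<bullet> w i))" using qB_val[OF syA[OF i]] w i by blast
          qed
          also have "\<dots> = ereal (\<Sum>i\<in>{1..m}. 1/2 * (y i \<bullet> w i))" by simp
          finally have v: "v = ereal (\<Sum>i\<in>{1..m}. 1/2 * (y i \<bullet> w i))" .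
          have "(\<Sum>i\<in>{1..m}. 1/2 * (xs i \<bullet> u) + u \<bullet> (y i - xs i)) \<le> (\<Sum>i\<in>{1..m}. 1/2 * (y i \<bullet> w i))"
            using w h(2) by (intro sum_mono rel_sg[OF sA nnA syA]) auto
          moreover have "(\<Sum>i\<in>{1..m}. 1/2 * (xs i \<bullet> u) + u \<bullet> (y i - xs i)) = 1/2 * (x \<bullet> u)"
          proof -
            have e1: "(\<Sum>i\<in>{1..m}. u \<bullet> y i) = u \<bullet> x" unfolding y(2)[symmetric] by (simp add: inner_sum_right)
            have e2: "(\<Sum>i\<in>{1..m}. u \<bullet> xs i) = u \<bullet> x" unfolding h(1) by (simp add: inner_sum_right)
            have e3: "(\<Sum>i\<in>{1..m}. xs i \<bullet> u) = x \<bullet> u" unfolding h(1) by (simp add: inner_sum_left)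
            have "(\<Sum>i\<in>{1..m}. 1/2 * (xs i \<bullet> u) + u \<bullet> (y i - xs i))
                = 1/2 * (\<Sum>i\<in>{1..m}. xs i \<bullet> u) + ((\<Sum>i\<in>{1..m}. u \<bullet> y i) - (\<Sum>i\<in>{1..m}. u \<bullet> xs i))"
              by (simp add: sum.distrib sum_distrib_left inner_diff_right sum_subtractf)
            then show ?thesis unfolding e1 e2 e3 by simp
          qed
          ultimately show ?thesis using v by simp
        qed
      qed
    qed
    then show ?thesis using qB_val[OF syP xu] by simp
  next
    case False
    have "F x = \<infinity>" unfolding F_def infconv_def
    proof -
      have "\<infinity> \<le> Inf {\<Sum>i\<in>{1..m}. qB (A i) (y i) |y. (\<Sum>i\<in>{1..m}. y i) = x}"
      proof (rule Inf_greatest)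
        fix v assume "v \<in> {\<Sum>i\<in>{1..m}. qB (A i) (y i) |y. (\<Sum>i\<in>{1..m}. y i) = x}"
        then obtain y where y: "v = (\<Sum>i\<in>{1..m}. qB (A i) (y i))" "(\<Sum>i\<in>{1..m}. y i) = x" by blast
        have "\<not> (\<forall>i\<in>{1..m}. y i \<in> Domain (A i))" using key y(2) False by blast
        then obtain i where i: "i \<in> {1..m}" "y i \<notin> Domain (A i)" by blast
        then have "qB (A i) (y i) = \<infinity>" by (simp add: qB_inf)
        then have "v = \<infinity>" unfolding y(1) sum_Pinfty using i(1) by blast
        then show "\<infinity> \<le> v" by simp
      qed
      then show "Inf {\<Sum>i\<in>{1..m}. qB (A i) (y i) |y. (\<Sum>i\<in>{1..m}. y i) = x} = \<infinity>"
        by (simp add: top_ereal_def[symmetric] top_unique)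
    qed
    then show ?thesis using qB_inf[OF False] by simp
  qed
  have Fq: "F = qB P" using Feq by blast
  have glq: "gen_linear_quadratic F"
    unfolding gen_linear_quadratic_def
  proof (intro exI conjI allI)
    show "linear_relation P" unfolding linear_relation_def by (rule sP)
    show "monotone_rel P" using rel_mono_of_nonneg[OF sP] nnP by blast
    fix x show "F x = qB P (x - 0) + ereal (0 \<bullet> x + 0)" using Feq by simp
  qed
  have sub: "subdiff (qB P) = P"
  proof
    show "P \<subseteq> subdiff (qB P)"
    proof
      fix p assume pP: "p \<in> P"
      obtain x s where p: "p = (x, s)" by (cases p)
      have xs: "(x, s) \<in> P" using pP p by simp
      have qx: "qB P x = ereal (1/2 * (x \<bullet> s))" using qB_val[OF syP xs] .
      have "qB P y \<ge> qB P x + ereal (s \<bullet> (y - x))" for y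
      proof (cases "y \<in> Domain P")
        case True
        then obtain w where yw: "(y, w) \<in> P" by blast
        have "1/2 * (x \<bullet> s) + s \<bullet> (y - x) \<le> 1/2 * (y \<bullet> w)"
          by (rule rel_sg[OF sP nnP syP xs yw])
        then show ?thesis using qx qB_val[OF syP yw] by simp
      next
        case False
        then show ?thesis by (simp add: qB_inf)
      qed
      then show "p \<in> subdiff (qB P)" unfolding subdiff_def p using qx by simp
    qed
  next
    show "subdiff (qB P) \<subseteq> P"
    proof
      fix p assume pS: "p \<in> subdiff (qB P)"
      obtain x s where p: "p = (x, s)" by (cases p)
      have "(x, s) \<in> subdiff (qB P)" using pS p by simp
      then have c: "\<bar>qB P x\<bar> \<noteq> \<infinity> \<and> (\<forall>y. qB P y \<ge> qB P x + ereal (s \<bullet> (y - x)))"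
        by (simp only: subdiff_def mem_Collect_eq case_prod_conv simp_thms)
      have fin: "\<bar>qB P x\<bar> \<noteq> \<infinity>" using c[THEN conjunct1] .
      have ineq: "\<And>y. qB P y \<ge> qB P x + ereal (s \<bullet> (y - x))" using c[THEN conjunct2] by (rule spec)
      have "x \<in> Domain P"
      proof (rule ccontr)
        assume "x \<notin> Domain P"
        then have "qB P x = \<infinity>" by (rule qB_inf)
        with fin show False by simp
      qed
      then obtain u where xu: "(x, u) \<in> P" by blast
      have "s - u \<in> perp (Domain P)" unfolding perp_def
      proof (intro CollectI ballI)
        fix d assume "d \<in> Domain P"
        then obtain e where de: "(d, e) \<in> P" by blast
        have sym: "x \<bullet> e = d \<bullet> u" using syP xu de unfolding symmetric_rel_def by blast
        have "0 \<le> t * (d \<bullet> u - s \<bullet> d) + t^2 * (1/2 * (d \<bullet> e))" for t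
        proof -
          have "(x, u) + t *\<^sub>R (d, e) \<in> P" using sP xu de by (metis subspace_add subspace_scale)
          then have mem: "(x + t *\<^sub>R d, u + t *\<^sub>R e) \<in> P" by simp
          have "qB P (x + t *\<^sub>R d) \<ge> qB P x + ereal (s \<bullet> (x + t *\<^sub>R d - x))" by (rule ineq)
          then have "1/2 * (x \<bullet> u) + s \<bullet> (t *\<^sub>R d) \<le> 1/2 * ((x + t *\<^sub>R d) \<bullet> (u + t *\<^sub>R e))"
            using qB_val[OF syP mem] qB_val[OF syP xu] by simp
          moreover have "(x + t *\<^sub>R d) \<bullet> (u + t *\<^sub>R e) = x \<bullet> u + 2 * t * (d \<bullet> u) + t^2 * (d \<bullet> e)"
            using sym by (simp add: inner_add_left inner_add_right power2_eq_square algebra_simps)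
          ultimately show ?thesis by (simp add: algebra_simps)
        qed
        then have "d \<bullet> u - s \<bullet> d = 0" by (rule real_quad_zero)
        then show "(s - u) \<bullet> d = 0" by (simp add: inner_diff_left inner_diff_right inner_commute)
      qed
      then have "(0, s - u) \<in> P" by (rule Lag_perp_dom[OF LP])
      then have "(x, u) + (0, s - u) \<in> P" using xu subspace_add[OF sP] by blast
      then show "p \<in> P" using p by simp
    qed
  qed
  show ?thesis using glq sub Fq rel_sum_conv[of m A] unfolding F_def P_def by simp
qed

end
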